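(* Let $\mathbb{K}$ be a commutative semiring. Every unambiguous two-way $\mathbb{K}$-automaton is equivalent to an unambiguous one-way $\mathbb{K}$-automaton, i.e. both assign the same weight to every word of $A^*$.
   Context: With $A_{\vdash\dashv}=A\cup\{\vdash,\dashv\}$ ($\vdash,\dashv$ fresh end-markers), a two-way $\mathbb{K}$-automaton $(Q,A,E,I,T)$ has finite state set $Q$, partial functions $I,T:Q\to\mathbb{K}$ (supports: initial/final states), and a partial function $E:Q\times(A_{\vdash\dashv}\times\{-1,+1\})\times Q\to\mathbb{K}$ whose support (the transitions) contains no $(p,\vdash,-1,q)$ nor $(p,\dashv,+1,q)$; for $t=(p,a,d,q)$: $\sigma(t)=p$, $\tau(t)=q$, $\lambda(t)=a$, $\delta(t)=d$. For $w=w_1\cdots w_n\in A^*$ set $w_0=\vdash$, $w_{n+1}=\dashv$. A computation on $w$ is a sequence of configurations $((p_0,i_0),\dots,(p_k,i_k))$, $p_j\in Q$, $i_j\in[0;n+1]$, with $i_0=1$, $i_k=n+1$, $p_0$ initial, $p_k$ final, and for each $j<k$ a transition $t_j$ with $\sigma(t_j)=p_j$, $\tau(t_j)=p_{j+1}$, $\lambda(t_j)=w_{i_j}$, $i_{j+1}=i_j+\delta(t_j)$; its weight is $I(p_0)\otimes\bigotimes_{j=0}^{k-1}E(t_j)\otimes T(p_k)$. The weight of $w$ is the sum ($\oplus$) of the weights of all computations on $w$ ($0_\mathbb{K}$ if none). A one-way $\mathbb{K}$-automaton $(P,A,G,I',T')$ has partial $I',T':P\to\mathbb{K}$ and partial $G:P\times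 A\times P\to\mathbb{K}$; its computations on $w$ are paths $(q_0,w_1,q_1)\cdots(q_{n-1},w_n,q_n)$ of transitions from an initial to a final state, with weight $I'(q_0)\otimes\bigotimes_j G(q_{j-1},w_j,q_j)\otimes T'(q_n)$, and the weight of $w$ is the sum of these. An automaton (one-way or two-way) is unambiguous if every word labels at most one computation. *)

theory Defs
  imports Main
begin

datatype 'a ext = LMark | Sym 'a | RMark

datatype dir = Back | Fwd

fun dval :: "dir \<Rightarrow> int" where
  "dval Back = -1" | "dval Fwd = 1"

record ('q, 'a, 'k) twa =
  tw_states :: "'q set"
  tw_init  :: "'q \<Rightarrow> 'k option"
  tw_final :: "'q \<Rightarrow> 'k option"
  tw_trans :: "'q \<Rightarrow> 'a ext \<Rightarrow> dir \<Rightarrow> 'q \<Rightarrow> 'k option"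

definition twa_wf :: "'a set \<Rightarrow> ('q, 'a, 'k) twa \<Rightarrow> bool" where
  "twa_wf A M \<longleftrightarrow>
     finite (tw_states M) \<and> finite A \<and>
     (\<forall>p. tw_init M p \<noteq> None \<longrightarrow> p \<in> tw_states M) \<and>
     (\<forall>p. tw_final M p \<noteq> None \<longrightarrow> p \<in> tw_states M) \<and>
     (\<forall>p a d q. tw_trans M p a d q \<noteq> None \<longrightarrow>
         p \<in> tw_states M \<and> q \<in> tw_states M \<and>
         (\<forall>b. a = Sym b \<longrightarrow> b \<in> A) \<and>
         \<not> (a = LMark \<and> d = Back) \<and> \<not> (a = RMark \<and> d = Fwd))"

(* w_0 = |-, w_i = i-th letter (1-based), w_{n+1} = -| *)
definition letter_at :: "'a list \<Rightarrow> int \<Rightarrow> 'a ext" where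
  "letter_at w i = (if i \<le> 0 then LMark
                    else if i \<ge> int (length w) + 1 then RMark
                    else Sym (w ! (nat i - 1)))"

definition dir_of :: "int \<Rightarrow> int \<Rightarrow> dir" where
  "dir_of i i' = (if i' = i + 1 then Fwd else Back)"

definition tw_comps :: "('q, 'a, 'k) twa \<Rightarrow> 'a list \<Rightarrow> ('q \<times> int) list set" where
  "tw_comps M w = {cs. cs \<noteq> [] \<and>
      (\<forall>c\<in>set cs. 0 \<le> snd c \<and> snd c \<le> int (length w) + 1) \<and>
      snd (hd cs) = 1 \<and> snd (last cs) = int (length w) + 1 \<and>
      tw_init M (fst (hd cs)) \<noteq> None \<and> tw_final M (fst (last cs)) \<noteq> None \<and>
      (\<forall>j < length cs - 1. \<exists>d.
          tw_trans M (fst (cs ! j)) (letter_at w (snd (cs ! j))) d (fst (cs ! (j+1))) \<noteq> None \<and>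
          snd (cs ! (j+1)) = snd (cs ! j) + dval d)}"

definition tw_comp_weight :: "('q, 'a, 'k::comm_semiring_1) twa \<Rightarrow> 'a list \<Rightarrow> ('q \<times> int) list \<Rightarrow> 'k" where
  "tw_comp_weight M w cs =
     the (tw_init M (fst (hd cs))) *
     prod_list (map (\<lambda>j. the (tw_trans M (fst (cs ! j)) (letter_at w (snd (cs ! j)))
                              (dir_of (snd (cs ! j)) (snd (cs ! (j+1)))) (fst (cs ! (j+1)))))
                    [0..<length cs - 1]) *
     the (tw_final M (fst (last cs)))"

(* Weight of a word: sum over all computations (this finite sum is the intended one
   whenever the set of computations is finite, in particular for unambiguous automata). *)
definition tw_weight :: "('q, 'a, 'k::comm_semiring_1) twa \<Rightarrow> 'a list \<Rightarrow> 'k" where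
  "tw_weight M w = (\<Sum>cs\<in>tw_comps M w. tw_comp_weight M w cs)"

definition twa_unambiguous :: "('q, 'a, 'k) twa \<Rightarrow> bool" where
  "twa_unambiguous M \<longleftrightarrow> (\<forall>w cs cs'. cs \<in> tw_comps M w \<longrightarrow> cs' \<in> tw_comps M w \<longrightarrow> cs = cs')"

record ('q, 'a, 'k) owa =
  ow_states :: "'q set"
  ow_init  :: "'q \<Rightarrow> 'k option"
  ow_final :: "'q \<Rightarrow> 'k option"
  ow_trans :: "'q \<Rightarrow> 'a \<Rightarrow> 'q \<Rightarrow> 'k option"

definition owa_wf :: "'a set \<Rightarrow> ('q, 'a, 'k) owa \<Rightarrow> bool" where
  "owa_wf A N \<longleftrightarrow>
     finite (ow_states N) \<and>
     (\<forall>p. ow_init N p \<noteq> None \<longrightarrow> p \<in> ow_states N) \<and>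
     (\<forall>p. ow_final N p \<noteq> None \<longrightarrow> p \<in> ow_states N) \<and>
     (\<forall>p a q. ow_trans N p a q \<noteq> None \<longrightarrow> p \<in> ow_states N \<and> q \<in> ow_states N \<and> a \<in> A)"

definition ow_comps :: "('q, 'a, 'k) owa \<Rightarrow> 'a list \<Rightarrow> 'q list set" where
  "ow_comps N w = {qs. length qs = length w + 1 \<and>
      ow_init N (qs ! 0) \<noteq> None \<and> ow_final N (qs ! length w) \<noteq> None \<and>
      (\<forall>j < length w. ow_trans N (qs ! j) (w ! j) (qs ! (j+1)) \<noteq> None)}"

definition ow_comp_weight :: "('q, 'a, 'k::comm_semiring_1) owa \<Rightarrow> 'a list \<Rightarrow> 'q list \<Rightarrow> 'k" where
  "ow_comp_weight N w qs =
     the (ow_init N (qs ! 0)) *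
     prod_list (map (\<lambda>j. the (ow_trans N (qs ! j) (w ! j) (qs ! (j+1)))) [0..<length w]) *
     the (ow_final N (qs ! length w))"

definition ow_weight :: "('q, 'a, 'k::comm_semiring_1) owa \<Rightarrow> 'a list \<Rightarrow> 'k" where
  "ow_weight N w = (\<Sum>qs\<in>ow_comps N w. ow_comp_weight N w qs)"

definition owa_unambiguous :: "('q, 'a, 'k) owa \<Rightarrow> bool" where
  "owa_unambiguous N \<longleftrightarrow> (\<forall>w qs qs'. qs \<in> ow_comps N w \<longrightarrow> qs' \<in> ow_comps N w \<longrightarrow> qs = qs')"

end

theory Submission
  imports Defs
begin


fun okp :: "('q,'a,'k) twa \<Rightarrow> 'a list \<Rightarrow> ('q \<times> int) list \<Rightarrow> bool" where
  "okp M w (c # c' # cs) = ((\<exists>d. tw_trans M (fst c) (letter_at w (snd c)) d (fst c') \<noteq> None \<and> snd c' = snd c + dval d) \<and> okp M w (c' # cs))"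
| "okp M w _ = True"

definition cr1 :: "'q \<times> int \<Rightarrow> 'q \<times> int \<Rightarrow> int \<Rightarrow> ('q \<times> 'q \<times> dir) list" where
  "cr1 c c' b = (if min (snd c) (snd c') = b then [(fst c, fst c', dir_of (snd c) (snd c'))] else [])"

fun xs_of :: "('q \<times> int) list \<Rightarrow> int \<Rightarrow> ('q \<times> 'q \<times> dir) list" where
  "xs_of (c # c' # cs) b = cr1 c c' b @ xs_of (c' # cs) b"
| "xs_of _ b = []"

fun pw :: "('c \<Rightarrow> 'c \<Rightarrow> 'k::comm_monoid_mult) \<Rightarrow> 'c list \<Rightarrow> 'k" where
  "pw F (c # c' # cs) = F c c' * pw F (c' # cs)"
| "pw F _ = 1"

lemma all_less_Suc_split: "(\<forall>j<Suc m. P j) = (P 0 \<and> (\<forall>j<m. P (Suc j)))"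
  by (auto simp: less_Suc_eq_0_disj)

lemma okp_nth:
  "okp M w cs \<longleftrightarrow> (\<forall>j < length cs - 1. \<exists>d. tw_trans M (fst (cs!j)) (letter_at w (snd (cs!j))) d (fst (cs!(j+1))) \<noteq> None \<and> snd (cs!(j+1)) = snd (cs!j) + dval d)"
proof (induction M w cs rule: okp.induct)
  case (1 M w c c' cs)
  show ?case
    by (simp only: okp.simps 1 length_Cons diff_Suc_1 all_less_Suc_split) simp
qed auto

lemma pw_nth:
  "prod_list (map (\<lambda>j. F (cs!j) (cs!(j+1))) [0..<length cs - 1]) = pw F cs"
proof (induction F cs rule: pw.induct)
  case (1 F c c' cs)
  have "[0..<length (c # c' # cs) - 1] = 0 # map Suc [0..<length (c' # cs) - 1]"
    by (simp add: upt_conv_Cons map_Suc_upt del: upt_Suc)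
  then show ?case using 1 by (simp add: comp_def)
qed auto

lemma tw_comps_iff:
  "cs \<in> tw_comps M w \<longleftrightarrow> cs \<noteq> [] \<and> (\<forall>c\<in>set cs. 0 \<le> snd c \<and> snd c \<le> int (length w) + 1) \<and>
      snd (hd cs) = 1 \<and> snd (last cs) = int (length w) + 1 \<and>
      tw_init M (fst (hd cs)) \<noteq> None \<and> tw_final M (fst (last cs)) \<noteq> None \<and> okp M w cs"
  by (simp add: tw_comps_def okp_nth)

lemma tw_comp_weight_pw:
  "tw_comp_weight M w cs = the (tw_init M (fst (hd cs))) *
     pw (\<lambda>c c'. the (tw_trans M (fst c) (letter_at w (snd c)) (dir_of (snd c) (snd c')) (fst c'))) cs *
     the (tw_final M (fst (last cs)))"
  unfolding tw_comp_weight_def by (simp add: pw_nth[symmetric])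



lemma okp_append:
  "okp M w (xs @ y # ys) \<longleftrightarrow> okp M w (xs @ [y]) \<and> okp M w (y # ys)"
proof (induction xs)
  case Nil then show ?case by simp
next
  case (Cons x xs) then show ?case by (cases xs) auto
qed

lemma okp_tl: "okp M w (c # cs) \<Longrightarrow> okp M w cs"
  by (cases cs) auto

lemma okp_suffix: "okp M w (pre @ suf) \<Longrightarrow> okp M w suf"
  by (induction pre) (auto dest: okp_tl)

lemma xs_of_append:
  "xs_of (xs @ y # ys) b = xs_of (xs @ [y]) b @ xs_of (y # ys) b"
proof (induction xs)
  case Nil then show ?case by simp
next
  case (Cons x xs) then show ?case by (cases xs) auto
qed

lemma xs_of_snoc:
  "xs_of (xs @ [y]) b = xs_of xs b @ (if xs = [] then [] else cr1 (last xs) y b)"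
proof (induction xs)
  case Nil then show ?case by simp
next
  case (Cons x xs) then show ?case by (cases xs) auto
qed

lemma okp_step: "okp M w (c # c' # cs) \<Longrightarrow> snd c' = snd c + 1 \<or> snd c' = snd c - 1"
proof -
  assume "okp M w (c # c' # cs)"
  then obtain d where "snd c' = snd c + dval d" by auto
  then show ?thesis by (cases d) auto
qed

lemma xs_of_below:
  "okp M w cs \<Longrightarrow> \<forall>c\<in>set cs. snd c < i \<Longrightarrow> i - 1 \<le> b \<Longrightarrow> xs_of cs b = []"
proof (induction cs b rule: xs_of.induct)
  case (1 c c' cs b)
  from okp_step[OF "1.prems"(1)] "1.prems"(2,3) have "cr1 c c' b = []"
    by (auto simp: cr1_def)
  with 1 show ?case by (auto dest: okp_tl)
qed auto

lemma xs_of_above: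
  "\<forall>c\<in>set cs. i < snd c \<Longrightarrow> b \<le> i \<Longrightarrow> xs_of cs b = []"
proof (induction cs b rule: xs_of.induct)
  case (1 c c' cs b)
  then have "cr1 c c' b = []" by (auto simp: cr1_def)
  with 1 show ?case by auto
qed auto

lemma first_hit_up:
  "okp M w cs \<Longrightarrow> cs \<noteq> [] \<Longrightarrow> snd (hd cs) < i \<Longrightarrow> \<exists>c\<in>set cs. i \<le> snd c \<Longrightarrow>
   \<exists>pre suf. cs = pre @ suf \<and> pre \<noteq> [] \<and> (\<forall>c\<in>set pre. snd c < i) \<and> suf \<noteq> [] \<and>
      snd (hd suf) = i \<and> snd (last pre) = i - 1"
proof (induction cs)
  case Nil then show ?case by simp
next
  case (Cons c cs')
  show ?case
  proof (cases cs')
    case Nil with Cons.prems show ?thesis by auto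
  next
    case (Cons c' cs'')
    have st: "snd c' = snd c + 1 \<or> snd c' = snd c - 1"
      using okp_step Cons.prems(1) \<open>cs' = c' # cs''\<close> by blast
    show ?thesis
    proof (cases "i \<le> snd c'")
      case True
      with st Cons.prems(3) have "snd c' = i" "snd c = i - 1" by auto
      then show ?thesis using \<open>cs' = c' # cs''\<close> Cons.prems(3)
        by (intro exI[of _ "[c]"] exI[of _ cs']) auto
    next
      case False
      have "okp M w cs'" using Cons.prems(1) okp_tl by blast
      moreover have "\<exists>c\<in>set cs'. i \<le> snd c" using Cons.prems(3,4) by auto
      ultimately obtain pre suf where ps: "cs' = pre @ suf" "pre \<noteq> []" "\<forall>c\<in>set pre. snd c < i"
          "suf \<noteq> []" "snd (hd suf) = i" "snd (last pre) = i - 1"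
        using Cons.IH \<open>cs' = c' # cs''\<close> False by auto
      then show ?thesis using Cons.prems(3)
        by (intro exI[of _ "c # pre"] exI[of _ suf]) auto
    qed
  qed
qed

lemma first_hit_down:
  "okp M w cs \<Longrightarrow> cs \<noteq> [] \<Longrightarrow> i < snd (hd cs) \<Longrightarrow> \<exists>c\<in>set cs. snd c \<le> i \<Longrightarrow>
   \<exists>pre suf. cs = pre @ suf \<and> pre \<noteq> [] \<and> (\<forall>c\<in>set pre. i < snd c) \<and> suf \<noteq> [] \<and>
      snd (hd suf) = i \<and> snd (last pre) = i + 1"
proof (induction cs)
  case Nil then show ?case by simp
next
  case (Cons c cs')
  show ?case
  proof (cases cs')
    case Nil with Cons.prems show ?thesis by auto
  next
    case (Cons c' cs'')
    have st: "snd c' = snd c + 1 \<or> snd c' = snd c - 1"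
      using okp_step Cons.prems(1) \<open>cs' = c' # cs''\<close> by blast
    show ?thesis
    proof (cases "snd c' \<le> i")
      case True
      with st Cons.prems(3) have "snd c' = i" "snd c = i + 1" by auto
      then show ?thesis using \<open>cs' = c' # cs''\<close> Cons.prems(3)
        by (intro exI[of _ "[c]"] exI[of _ cs']) auto
    next
      case False
      have "okp M w cs'" using Cons.prems(1) okp_tl by blast
      moreover have "\<exists>c\<in>set cs'. snd c \<le> i" using Cons.prems(3,4) by auto
      ultimately obtain pre suf where ps: "cs' = pre @ suf" "pre \<noteq> []" "\<forall>c\<in>set pre. i < snd c"
          "suf \<noteq> []" "snd (hd suf) = i" "snd (last pre) = i + 1"
        using Cons.IH \<open>cs' = c' # cs''\<close> False by auto
      then show ?thesis using Cons.prems(3)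
        by (intro exI[of _ "c # pre"] exI[of _ suf]) auto
    qed
  qed
qed



inductive vis :: "('q,'a,'k) twa \<Rightarrow> 'a ext \<Rightarrow> bool \<Rightarrow> 'q \<Rightarrow> 'q \<Rightarrow> ('q\<times>'q\<times>dir) list \<Rightarrow> ('q\<times>'q\<times>dir) list \<Rightarrow> bool"
  for M a en pe where
  vEnd: "en \<Longrightarrow> vis M a en pe pe [] []"
| vL: "tw_trans M s a Back q \<noteq> None \<Longrightarrow> vis M a en pe s' L R \<Longrightarrow> vis M a en pe s ((s,q,Back)#(q',s',Fwd)#L) R"
| vRlast: "tw_trans M s a Fwd q \<noteq> None \<Longrightarrow> vis M a en pe s [] [(s,q,Fwd)]"
| vR: "tw_trans M s a Fwd q \<noteq> None \<Longrightarrow> vis M a en pe s' L R \<Longrightarrow> vis M a en pe s L ((s,q,Fwd)#(q',s',Back)#R)"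

lemma okp_prefix: "okp M w (pre @ suf) \<Longrightarrow> okp M w pre"
proof (induction pre)
  case Nil then show ?case by simp
next
  case (Cons x xs) then show ?case by (cases xs; cases suf) auto
qed

lemma xs_of_split:
  "pre \<noteq> [] \<Longrightarrow> suf \<noteq> [] \<Longrightarrow> xs_of (pre @ suf) b = xs_of pre b @ cr1 (last pre) (hd suf) b @ xs_of suf b"
proof -
  assume a: "pre \<noteq> []" "suf \<noteq> []"
  then obtain h t where "suf = h # t" by (cases suf) auto
  then show ?thesis using a by (simp only: xs_of_append[of pre h t] xs_of_snoc) simp
qed



lemma xs_of_cons_split:
  "pre \<noteq> [] \<Longrightarrow> xs_of (c # pre @ h # t) b = cr1 c (hd pre) b @ xs_of pre b @ cr1 (last pre) h b @ xs_of (h # t) b"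
proof -
  assume "pre \<noteq> []"
  then obtain p pr' where p: "pre = p # pr'" by (cases pre) auto
  have "xs_of (c # pre @ h # t) b = cr1 c p b @ xs_of (pre @ h # t) b" by (simp add: p)
  also have "\<dots> = cr1 c p b @ xs_of pre b @ cr1 (last pre) h b @ xs_of (h # t) b"
    using xs_of_split[of pre "h # t" b] p by simp
  finally show ?thesis using p by simp
qed

lemma vis_path:
  "okp M w cs \<Longrightarrow> cs \<noteq> [] \<Longrightarrow> \<forall>c\<in>set cs. 0 \<le> snd c \<and> snd c \<le> int (length w) + 1 \<Longrightarrow>
   last cs = (pe, int (length w) + 1) \<Longrightarrow> hd cs = (s, i) \<Longrightarrow>
   vis M (letter_at w i) (i = int (length w) + 1) pe s (xs_of cs (i - 1)) (xs_of cs i)"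
proof (induction "length cs" arbitrary: cs s i rule: less_induct)
  case less
  note pr = less.prems
  obtain cs' where cs: "cs = (s,i) # cs'" using pr(2,5) by (cases cs) auto
  show ?case
  proof (cases cs')
    case Nil
    with cs pr(4) show ?thesis by (auto intro: vEnd)
  next
    case (Cons c' rest)
    obtain d where d: "tw_trans M s (letter_at w i) d (fst c') \<noteq> None" "snd c' = i + dval d"
      using pr(1) cs Cons by auto
    have okc': "okp M w cs'" using pr(1) cs okp_tl by blast
    have lastc': "last cs' = (pe, int (length w) + 1)" using pr(4) cs Cons by simp
    have rng': "\<forall>c\<in>set cs'. 0 \<le> snd c \<and> snd c \<le> int (length w) + 1" using pr(3) cs by simp
    have ile: "i \<le> int (length w) + 1" using pr(3) cs by simp
    show ?thesis
    proof (cases d)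
      case Back
      then have c'i: "snd c' = i - 1" using d by simp
      have ne: "cs' \<noteq> []" using Cons by simp
      have "last cs' \<in> set cs'" using ne by simp
      then have ex: "\<exists>c\<in>set cs'. i \<le> snd c" using lastc' ile by (intro bexI[of _ "last cs'"]) auto
      have hl: "snd (hd cs') < i" using Cons c'i by simp
      obtain pre suf where ps: "cs' = pre @ suf" "pre \<noteq> []" "\<forall>c\<in>set pre. snd c < i"
          "suf \<noteq> []" "snd (hd suf) = i" "snd (last pre) = i - 1"
        using first_hit_up[OF okc' ne hl ex] by blast
      obtain h suf' where hs: "suf = h # suf'" using ps(4) by (cases suf) auto
      have okpre: "okp M w pre" using okc' ps(1) okp_prefix by blast
      have okpsuf: "okp M w suf" using okc' ps(1) okp_suffix by blast
      have csx: "cs = (s,i) # pre @ h # suf'" using cs ps(1) hs by simp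
      have hp: "hd pre = c'" using Cons ps(1,2) by (cases pre) auto
      have sh: "snd h = i" using hs ps(5) by simp
      have x1: "xs_of cs (i - 1) = (s, fst c', Back) # (fst (last pre), fst h, Fwd) # xs_of suf (i - 1)"
        unfolding csx xs_of_cons_split[OF ps(2)] hp xs_of_below[OF okpre ps(3), of "i - 1", simplified]
        using c'i ps(6) sh hs by (simp add: cr1_def dir_of_def)
      have x2: "xs_of cs i = xs_of suf i"
        unfolding csx xs_of_cons_split[OF ps(2)] hp xs_of_below[OF okpre ps(3), of "i", simplified]
        using c'i ps(6) sh hs by (simp add: cr1_def dir_of_def)
      have "length suf < length cs" using cs ps(1,2) by simp
      moreover have "last suf = (pe, int (length w) + 1)" using lastc' ps(1,4) by simp
      moreover have "hd suf = (fst h, i)" using hs ps(5) by (cases h) simp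
      moreover have "\<forall>c\<in>set suf. 0 \<le> snd c \<and> snd c \<le> int (length w) + 1" using rng' ps(1) by simp
      ultimately have "vis M (letter_at w i) (i = int (length w) + 1) pe (fst h) (xs_of suf (i - 1)) (xs_of suf i)"
        using less.hyps okpsuf ps(4) by blast
      then show ?thesis unfolding x1 x2 using d(1) Back by (auto intro: vL)
    next
      case Fwd
      then have c'i: "snd c' = i + 1" using d by simp
      show ?thesis
      proof (cases "\<exists>c\<in>set cs'. snd c \<le> i")
        case True
        have ne: "cs' \<noteq> []" using Cons by simp
        have hl: "i < snd (hd cs')" using Cons c'i by simp
        obtain pre suf where ps: "cs' = pre @ suf" "pre \<noteq> []" "\<forall>c\<in>set pre. i < snd c"
            "suf \<noteq> []" "snd (hd suf) = i" "snd (last pre) = i + 1"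
          using first_hit_down[OF okc' ne hl True] by blast
        obtain h suf' where hs: "suf = h # suf'" using ps(4) by (cases suf) auto
        have okpsuf: "okp M w suf" using okc' ps(1) okp_suffix by blast
        have csx: "cs = (s,i) # pre @ h # suf'" using cs ps(1) hs by simp
        have hp: "hd pre = c'" using Cons ps(1,2) by (cases pre) auto
        have sh: "snd h = i" using hs ps(5) by simp
        have x1: "xs_of cs i = (s, fst c', Fwd) # (fst (last pre), fst h, Back) # xs_of suf i"
          unfolding csx xs_of_cons_split[OF ps(2)] hp xs_of_above[OF ps(3), of "i", simplified]
          using c'i ps(6) sh hs by (simp add: cr1_def dir_of_def)
        have x2: "xs_of cs (i - 1) = xs_of suf (i - 1)"
          unfolding csx xs_of_cons_split[OF ps(2)] hp xs_of_above[OF ps(3), of "i - 1", simplified]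
          using c'i ps(6) sh hs by (simp add: cr1_def dir_of_def)
        have "length suf < length cs" using cs ps(1,2) by simp
        moreover have "last suf = (pe, int (length w) + 1)" using lastc' ps(1,4) by simp
        moreover have "hd suf = (fst h, i)" using hs ps(5) by (cases h) simp
        moreover have "\<forall>c\<in>set suf. 0 \<le> snd c \<and> snd c \<le> int (length w) + 1" using rng' ps(1) by simp
        ultimately have "vis M (letter_at w i) (i = int (length w) + 1) pe (fst h) (xs_of suf (i - 1)) (xs_of suf i)"
          using less.hyps okpsuf ps(4) by blast
        then show ?thesis unfolding x1 x2 using d(1) Fwd by (auto intro: vR)
      next
        case False
        then have all: "\<forall>c\<in>set cs'. i < snd c" by auto
        have x1: "xs_of cs i = [(s, fst c', Fwd)]"
          using cs Cons c'i xs_of_above[OF all, of i] by (simp add: cr1_def dir_of_def)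
        have x2: "xs_of cs (i - 1) = []"
          using cs Cons c'i xs_of_above[OF all, of "i - 1"] by (simp add: cr1_def dir_of_def)
        show ?thesis unfolding x1 x2 using d(1) Fwd by (auto intro: vRlast)
      qed
    qed
  qed
qed



definition chk0 :: "('q,'a,'k) twa \<Rightarrow> 'q \<Rightarrow> ('q\<times>'q\<times>dir) list \<Rightarrow> bool" where
  "chk0 M pe X \<longleftrightarrow> X = [] \<or> (\<exists>q s R'. X = (q,s,Back)#R' \<and> vis M LMark False pe s [] R')"

definition chkI :: "('q,'a,'k) twa \<Rightarrow> 'a ext \<Rightarrow> bool \<Rightarrow> bool \<Rightarrow> 'q \<Rightarrow> 'q \<Rightarrow> ('q\<times>'q\<times>dir) list \<Rightarrow> ('q\<times>'q\<times>dir) list \<Rightarrow> bool" where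
  "chkI M a st en p0 pe L R \<longleftrightarrow> (if st then vis M a en pe p0 L R else (\<exists>q s L'. L = (q,s,Fwd)#L' \<and> vis M a en pe s L' R))"

lemma letter_at_0: "letter_at w 0 = LMark" by (simp add: letter_at_def)
lemma letter_at_end: "letter_at w (int (length w) + 1) = RMark" by (simp add: letter_at_def)
lemma letter_at_Sym: "j < length w \<Longrightarrow> letter_at w (int j + 1) = Sym (w ! j)" by (simp add: letter_at_def nat_add_distrib)

lemma pos_chk:
  assumes cs: "cs \<in> tw_comps M w" and i: "1 \<le> i" "i \<le> int (length w) + 1"
  shows "chkI M (letter_at w i) (i = 1) (i = int (length w) + 1) (fst (hd cs)) (fst (last cs)) (xs_of cs (i - 1)) (xs_of cs i)"
proof -
  note C = cs[unfolded tw_comps_iff]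
  have lst: "last cs = (fst (last cs), int (length w) + 1)" using C by (cases "last cs") auto
  show ?thesis
  proof (cases "i = 1")
    case True
    have hh: "hd cs = (fst (hd cs), i)" using C True by (cases "hd cs") auto
    have "vis M (letter_at w i) (i = int (length w) + 1) (fst (last cs)) (fst (hd cs)) (xs_of cs (i - 1)) (xs_of cs i)"
      using vis_path[of M w cs, OF _ _ _ lst hh] C by blast
    then show ?thesis using True by (simp add: chkI_def)
  next
    case False
    have ne: "cs \<noteq> []" and ok: "okp M w cs" using C by auto
    have hl: "snd (hd cs) < i" using C False i by auto
    have "last cs \<in> set cs" using ne by simp
    then have ex: "\<exists>c\<in>set cs. i \<le> snd c" using C i by (intro bexI[of _ "last cs"]) auto
    obtain pre suf where ps: "cs = pre @ suf" "pre \<noteq> []" "\<forall>c\<in>set pre. snd c < i"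
        "suf \<noteq> []" "snd (hd suf) = i" "snd (last pre) = i - 1"
      using first_hit_up[OF ok ne hl ex] by blast
    have okpre: "okp M w pre" using ok ps(1) okp_prefix by blast
    have oksuf: "okp M w suf" using ok ps(1) okp_suffix by blast
    have x1: "xs_of cs (i - 1) = (fst (last pre), fst (hd suf), Fwd) # xs_of suf (i - 1)"
      unfolding ps(1) xs_of_split[OF ps(2,4)] xs_of_below[OF okpre ps(3), of "i - 1", simplified]
      using ps(5,6) by (simp add: cr1_def dir_of_def)
    have x2: "xs_of cs i = xs_of suf i"
      unfolding ps(1) xs_of_split[OF ps(2,4)] xs_of_below[OF okpre ps(3), of "i", simplified]
      using ps(5,6) by (simp add: cr1_def dir_of_def)
    have hs: "hd suf = (fst (hd suf), i)" using ps(5) by (cases "hd suf") auto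
    have ls: "last suf = (fst (last cs), int (length w) + 1)" using lst ps(1,4) by simp
    have rs: "\<forall>c\<in>set suf. 0 \<le> snd c \<and> snd c \<le> int (length w) + 1" using C ps(1) by auto
    from vis_path[OF oksuf ps(4) rs ls hs] False show ?thesis
      unfolding x1 x2 chkI_def by auto
  qed
qed

lemma pos0_chk:
  assumes cs: "cs \<in> tw_comps M w"
  shows "chk0 M (fst (last cs)) (xs_of cs 0)"
proof -
  note C = cs[unfolded tw_comps_iff]
  have lst: "last cs = (fst (last cs), int (length w) + 1)" using C by (cases "last cs") auto
  have ne: "cs \<noteq> []" and ok: "okp M w cs" using C by auto
  show ?thesis
  proof (cases "\<exists>c\<in>set cs. snd c \<le> 0")
    case False
    then have "\<forall>c\<in>set cs. 0 < snd c" by auto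
    from xs_of_above[OF this, of 0] show ?thesis by (simp add: chk0_def)
  next
    case True
    have hl: "0 < snd (hd cs)" using C by auto
    obtain pre suf where ps: "cs = pre @ suf" "pre \<noteq> []" "\<forall>c\<in>set pre. 0 < snd c"
        "suf \<noteq> []" "snd (hd suf) = 0" "snd (last pre) = 0 + 1"
      using first_hit_down[OF ok ne hl True] by blast
    have oksuf: "okp M w suf" using ok ps(1) okp_suffix by blast
    have x1: "xs_of cs 0 = (fst (last pre), fst (hd suf), Back) # xs_of suf 0"
      unfolding ps(1) xs_of_split[OF ps(2,4)] xs_of_above[OF ps(3), of 0, simplified]
      using ps(5,6) by (simp add: cr1_def dir_of_def)
    have rs: "\<forall>c\<in>set suf. 0 \<le> snd c \<and> snd c \<le> int (length w) + 1" using C ps(1) by auto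
    then have "\<forall>c\<in>set suf. -1 < snd c" by auto
    from xs_of_above[OF this, of "-1"] have x0: "xs_of suf (0 - 1) = []" by simp
    have hs: "hd suf = (fst (hd suf), 0)" using ps(5) by (cases "hd suf") auto
    have ls: "last suf = (fst (last cs), int (length w) + 1)" using lst ps(1,4) by simp
    from vis_path[OF oksuf ps(4) rs ls hs] show ?thesis
      unfolding x1 chk0_def x0 by (simp add: letter_at_0)
  qed
qed



definition waitR :: "('q,'a,'k) twa \<Rightarrow> 'a list \<Rightarrow> 'q \<Rightarrow> (int \<Rightarrow> ('q\<times>'q\<times>dir) list) \<Rightarrow> int \<Rightarrow> bool" where
  "waitR M w pe rem j \<longleftrightarrow> (rem (j - 1) = [] \<and> rem j = []) \<or>
     (\<exists>q s R'. rem j = (q,s,Back)#R' \<and> vis M (letter_at w j) (j = int (length w) + 1) pe s (rem (j - 1)) R')"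

definition waitL :: "('q,'a,'k) twa \<Rightarrow> 'a list \<Rightarrow> 'q \<Rightarrow> (int \<Rightarrow> ('q\<times>'q\<times>dir) list) \<Rightarrow> int \<Rightarrow> bool" where
  "waitL M w pe rem j \<longleftrightarrow> (rem (j - 1) = [] \<and> rem j = []) \<or>
     (\<exists>q s L'. rem (j - 1) = (q,s,Fwd)#L' \<and> vis M (letter_at w j) (j = int (length w) + 1) pe s L' (rem j))"

definition Inv :: "('q,'a,'k) twa \<Rightarrow> 'a list \<Rightarrow> 'q \<Rightarrow> 'q \<Rightarrow> int \<Rightarrow> (int \<Rightarrow> ('q\<times>'q\<times>dir) list) \<Rightarrow> bool" where
  "Inv M w pe s i rem \<longleftrightarrow> 0 \<le> i \<and> i \<le> int (length w) + 1 \<and>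
     vis M (letter_at w i) (i = int (length w) + 1) pe s (rem (i - 1)) (rem i) \<and>
     (\<forall>j. 0 \<le> j \<and> j < i \<longrightarrow> waitR M w pe rem j) \<and>
     (\<forall>j. i < j \<and> j \<le> int (length w) + 1 \<longrightarrow> waitL M w pe rem j) \<and>
     (\<forall>b. b < 0 \<or> int (length w) < b \<longrightarrow> rem b = [])"

definition mu :: "nat \<Rightarrow> (int \<Rightarrow> 'x list) \<Rightarrow> nat" where
  "mu n rem = (\<Sum>b\<in>{0..int n}. length (rem b))"

lemma mu_dec:
  assumes "0 \<le> b" "b \<le> int n" "rem b = x # xs"
  shows "mu n (rem(b := xs)) < mu n rem"
proof -
  have fin: "finite {0..int n}" by simp
  have bin: "b \<in> {0..int n}" using assms by simp
  have "mu n (rem(b := xs)) = length xs + (\<Sum>b'\<in>{0..int n} - {b}. length ((rem(b := xs)) b'))"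
    unfolding mu_def by (subst sum.remove[OF fin bin]) simp
  also have "(\<Sum>b'\<in>{0..int n} - {b}. length ((rem(b := xs)) b')) = (\<Sum>b'\<in>{0..int n} - {b}. length (rem b'))"
    by (rule sum.cong) auto
  also have "length xs + \<dots> < mu n rem"
    unfolding mu_def using sum.remove[OF fin bin, of "\<lambda>b. length (rem b)"] assms(3) by simp
  finally show ?thesis .
qed

lemma all_empty:
  assumes I: "\<forall>j. 0 \<le> j \<and> j < int (length w) + 1 \<longrightarrow> waitR M w pe rem j"
    and bd: "\<forall>b. b < 0 \<or> int (length w) < b \<longrightarrow> rem b = []"
    and e: "rem (int (length w)) = []"
  shows "rem b = []"
proof -
  have "\<forall>k. k \<le> length w \<longrightarrow> rem (int (length w) - int k) = []"
  proof
    fix k show "k \<le> length w \<longrightarrow> rem (int (length w) - int k) = []"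
    proof (induction k)
      case 0 then show ?case using e by simp
    next
      case (Suc k)
      show ?case
      proof
        assume k: "Suc k \<le> length w"
        let ?j = "int (length w) - int k"
        have "waitR M w pe rem ?j" using I k by auto
        moreover have "rem ?j = []" using Suc k by simp
        ultimately have "rem (?j - 1) = []" unfolding waitR_def by auto
        then show "rem (int (length w) - int (Suc k)) = []" by (simp add: algebra_simps)
      qed
    qed
  qed
  note A = this
  show ?thesis
  proof (cases "b < 0 \<or> int (length w) < b")
    case True then show ?thesis using bd by blast
  next
    case False
    then have "nat (int (length w) - b) \<le> length w" "int (length w) - int (nat (int (length w) - b)) = b" by auto
    then show ?thesis using A by metis
  qed
qed



lemma waitR_cong: "rem (j - 1) = rem' (j - 1) \<Longrightarrow> rem j = rem' j \<Longrightarrow> waitR M w pe rem j = waitR M w pe rem' j"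
  by (simp add: waitR_def)
lemma waitL_cong: "rem (j - 1) = rem' (j - 1) \<Longrightarrow> rem j = rem' j \<Longrightarrow> waitL M w pe rem j = waitL M w pe rem' j"
  by (simp add: waitL_def)

lemma extend:
  assumes "path' \<noteq> []" "hd path' = (q, i')" "last path' = X" "okp M w path'" "\<forall>c\<in>set path'. P c"
    "\<forall>b. xs_of path' b = rem' b" "tw_trans M s (letter_at w i) d q \<noteq> None" "i' = i + dval d" "P (s,i)"
    "\<forall>b. cr1 (s,i) (q,i') b @ rem' b = rem b"
  shows "\<exists>path. path \<noteq> [] \<and> hd path = (s,i) \<and> last path = X \<and> okp M w path \<and> (\<forall>c\<in>set path. P c) \<and> (\<forall>b. xs_of path b = rem b)"
proof -
  obtain r where p: "path' = (q,i') # r" using assms(1,2) by (cases path') auto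
  show ?thesis
    using assms p by (intro exI[of _ "(s,i) # path'"]) auto
qed

lemma vis_disj:
  assumes "vis M a en pe s L R"
  shows "(en \<and> s = pe \<and> L = [] \<and> R = []) \<or>
    (\<exists>q s' L' q'. tw_trans M s a Back q \<noteq> None \<and> vis M a en pe s' L' R \<and> L = (s,q,Back)#(q',s',Fwd)#L') \<or>
    (\<exists>q. tw_trans M s a Fwd q \<noteq> None \<and> L = [] \<and> R = [(s,q,Fwd)]) \<or>
    (\<exists>q s' R' q'. tw_trans M s a Fwd q \<noteq> None \<and> vis M a en pe s' L R' \<and> R = (s,q,Fwd)#(q',s',Back)#R')"
  using assms by (cases rule: vis.cases) blast+

lemma decode:
  "Inv M w pe s i rem \<Longrightarrow> \<exists>path. path \<noteq> [] \<and> hd path = (s,i) \<and> last path = (pe, int (length w) + 1) \<and>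
     okp M w path \<and> (\<forall>c\<in>set path. 0 \<le> snd c \<and> snd c \<le> int (length w) + 1) \<and> (\<forall>b. xs_of path b = rem b)"
proof (induction "mu (length w) rem" arbitrary: s i rem rule: less_induct)
  case less
  note I = less.prems[unfolded Inv_def]
  let ?N = "int (length w) + 1"
  let ?P = "\<lambda>c::('q\<times>int). 0 \<le> snd c \<and> snd c \<le> ?N"
  have v: "vis M (letter_at w i) (i = ?N) pe s (rem (i-1)) (rem i)" using I by blast
  have bd: "\<And>b. b < 0 \<or> int (length w) < b \<Longrightarrow> rem b = []" using I by blast
  have WR: "\<And>j. 0 \<le> j \<Longrightarrow> j < i \<Longrightarrow> waitR M w pe rem j" using I by blast
  have WL: "\<And>j. i < j \<Longrightarrow> j \<le> ?N \<Longrightarrow> waitL M w pe rem j" using I by blast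
  have Pi: "?P (s,i)" using I by simp
  from vis_disj[OF v] consider
      (E) "i = ?N" "s = pe" "rem (i-1) = []" "rem i = []"
    | (L) q s' L' q' where "tw_trans M s (letter_at w i) Back q \<noteq> None" "vis M (letter_at w i) (i = ?N) pe s' L' (rem i)"
          "rem (i-1) = (s,q,Back)#(q',s',Fwd)#L'"
    | (RL) q where "tw_trans M s (letter_at w i) Fwd q \<noteq> None" "rem (i-1) = []" "rem i = [(s,q,Fwd)]"
    | (R) q s' R' q' where "tw_trans M s (letter_at w i) Fwd q \<noteq> None" "vis M (letter_at w i) (i = ?N) pe s' (rem (i-1)) R'"
          "rem i = (s,q,Fwd)#(q',s',Back)#R'"
    by blast
  then show ?case
  proof cases
    case E
    have "\<forall>j. 0 \<le> j \<and> j < ?N \<longrightarrow> waitR M w pe rem j" using WR E by auto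
    moreover have "rem (int (length w)) = []" using E by simp
    ultimately have "\<And>b. rem b = []" using all_empty[of w M pe rem] bd by blast
    then show ?thesis using E by (intro exI[of _ "[(pe, ?N)]"]) auto
  next
    case L
    have i1: "0 \<le> i - 1" "i - 1 \<le> int (length w)" using bd[of "i - 1"] L(3) by fastforce+
    have "waitR M w pe rem (i - 1)" using WR i1 by simp
    then obtain R0 where r0: "rem (i - 1) = (s,q,Back)#R0" "vis M (letter_at w (i-1)) (i - 1 = ?N) pe q (rem (i-1-1)) R0"
      unfolding waitR_def using L(3) by auto
    have R0: "R0 = (q',s',Fwd)#L'" using r0(1) L(3) by simp
    define rem' where "rem' = rem(i - 1 := (q',s',Fwd)#L')"
    have "Inv M w pe q (i - 1) rem'"
      unfolding Inv_def
    proof (intro conjI allI impI)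
      show "0 \<le> i - 1" "i - 1 \<le> ?N" using i1 by auto
      show "vis M (letter_at w (i - 1)) (i - 1 = ?N) pe q (rem' (i - 1 - 1)) (rem' (i - 1))"
        using r0(2) R0 by (simp add: rem'_def)
    next
      fix j assume j: "0 \<le> j \<and> j < i - 1"
      then have "waitR M w pe rem j" using WR by simp
      then show "waitR M w pe rem' j" using j by (subst waitR_cong[of rem' j rem]) (simp_all add: rem'_def)
    next
      fix j assume j: "i - 1 < j \<and> j \<le> ?N"
      show "waitL M w pe rem' j"
      proof (cases "j = i")
        case True
        then show ?thesis using L(2) by (simp add: waitL_def rem'_def)
      next
        case False
        then have "waitL M w pe rem j" using WL j by simp
        then show ?thesis using j False by (subst waitL_cong[of rem' j rem]) (simp_all add: rem'_def)
      qed
    next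
      fix b assume "b < 0 \<or> int (length w) < b"
      then show "rem' b = []" using bd i1 by (auto simp: rem'_def)
    qed
    moreover have "mu (length w) rem' < mu (length w) rem"
      unfolding rem'_def using mu_dec[of "i - 1" "length w" rem, OF i1 L(3)] .
    ultimately obtain path' where p: "path' \<noteq> []" "hd path' = (q, i - 1)" "last path' = (pe, ?N)"
        "okp M w path'" "\<forall>c\<in>set path'. ?P c" "\<forall>b. xs_of path' b = rem' b"
      using less.hyps by blast
    show ?thesis
    proof (rule extend[OF p L(1)])
      show "i - 1 = i + dval Back" by simp
      show "?P (s,i)" by (rule Pi)
      show "\<forall>b. cr1 (s, i) (q, i - 1) b @ rem' b = rem b"
        using L(3) by (auto simp: cr1_def dir_of_def rem'_def)
    qed
  next
    case RL
    have i1: "0 \<le> i" "i \<le> int (length w)" using bd[of i] RL(3) by fastforce+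
    have "waitL M w pe rem (i + 1)" using WL i1 by simp
    then obtain L0 where l0: "rem i = (s,q,Fwd)#L0" "vis M (letter_at w (i+1)) (i + 1 = ?N) pe q L0 (rem (i+1))"
      unfolding waitL_def using RL(3) by auto
    have L0: "L0 = []" using l0(1) RL(3) by simp
    define rem' where "rem' = rem(i := [])"
    have "Inv M w pe q (i + 1) rem'"
      unfolding Inv_def
    proof (intro conjI allI impI)
      show "0 \<le> i + 1" "i + 1 \<le> ?N" using i1 by auto
      show "vis M (letter_at w (i + 1)) (i + 1 = ?N) pe q (rem' (i + 1 - 1)) (rem' (i + 1))"
        using l0(2) L0 by (simp add: rem'_def)
    next
      fix j assume j: "0 \<le> j \<and> j < i + 1"
      show "waitR M w pe rem' j"
      proof (cases "j = i")
        case True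
        then show ?thesis using RL(2) by (simp add: waitR_def rem'_def)
      next
        case False
        then have "waitR M w pe rem j" using WR j by simp
        then show ?thesis using j False by (subst waitR_cong[of rem' j rem]) (simp_all add: rem'_def)
      qed
    next
      fix j assume j: "i + 1 < j \<and> j \<le> ?N"
      then have "waitL M w pe rem j" using WL by simp
      then show "waitL M w pe rem' j" using j by (subst waitL_cong[of rem' j rem]) (simp_all add: rem'_def)
    next
      fix b assume "b < 0 \<or> int (length w) < b"
      then show "rem' b = []" using bd i1 by (auto simp: rem'_def)
    qed
    moreover have "mu (length w) rem' < mu (length w) rem"
      unfolding rem'_def using mu_dec[of i "length w" rem, OF i1 RL(3)] .
    ultimately obtain path' where p: "path' \<noteq> []" "hd path' = (q, i + 1)" "last path' = (pe, ?N)"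
        "okp M w path'" "\<forall>c\<in>set path'. ?P c" "\<forall>b. xs_of path' b = rem' b"
      using less.hyps by blast
    show ?thesis
    proof (rule extend[OF p RL(1)])
      show "i + 1 = i + dval Fwd" by simp
      show "?P (s,i)" by (rule Pi)
      show "\<forall>b. cr1 (s, i) (q, i + 1) b @ rem' b = rem b"
        using RL(3) by (auto simp: cr1_def dir_of_def rem'_def)
    qed
  next
    case R
    have i1: "0 \<le> i" "i \<le> int (length w)" using bd[of i] R(3) by fastforce+
    have "waitL M w pe rem (i + 1)" using WL i1 by simp
    then obtain L0 where l0: "rem i = (s,q,Fwd)#L0" "vis M (letter_at w (i+1)) (i + 1 = ?N) pe q L0 (rem (i+1))"
      unfolding waitL_def using R(3) by auto
    have L0: "L0 = (q',s',Back)#R'" using l0(1) R(3) by simp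
    define rem' where "rem' = rem(i := (q',s',Back)#R')"
    have "Inv M w pe q (i + 1) rem'"
      unfolding Inv_def
    proof (intro conjI allI impI)
      show "0 \<le> i + 1" "i + 1 \<le> ?N" using i1 by auto
      show "vis M (letter_at w (i + 1)) (i + 1 = ?N) pe q (rem' (i + 1 - 1)) (rem' (i + 1))"
        using l0(2) L0 by (simp add: rem'_def)
    next
      fix j assume j: "0 \<le> j \<and> j < i + 1"
      show "waitR M w pe rem' j"
      proof (cases "j = i")
        case True
        then show ?thesis using R(2) by (simp add: waitR_def rem'_def)
      next
        case False
        then have "waitR M w pe rem j" using WR j by simp
        then show ?thesis using j False by (subst waitR_cong[of rem' j rem]) (simp_all add: rem'_def)
      qed
    next
      fix j assume j: "i + 1 < j \<and> j \<le> ?N"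
      then have "waitL M w pe rem j" using WL by simp
      then show "waitL M w pe rem' j" using j by (subst waitL_cong[of rem' j rem]) (simp_all add: rem'_def)
    next
      fix b assume "b < 0 \<or> int (length w) < b"
      then show "rem' b = []" using bd i1 by (auto simp: rem'_def)
    qed
    moreover have "mu (length w) rem' < mu (length w) rem"
      unfolding rem'_def using mu_dec[of i "length w" rem, OF i1 R(3)] .
    ultimately obtain path' where p: "path' \<noteq> []" "hd path' = (q, i + 1)" "last path' = (pe, ?N)"
        "okp M w path'" "\<forall>c\<in>set path'. ?P c" "\<forall>b. xs_of path' b = rem' b"
      using less.hyps by blast
    show ?thesis
    proof (rule extend[OF p R(1)])
      show "i + 1 = i + dval Fwd" by simp
      show "?P (s,i)" by (rule Pi)
      show "\<forall>b. cr1 (s, i) (q, i + 1) b @ rem' b = rem b"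
        using R(3) by (auto simp: cr1_def dir_of_def rem'_def)
    qed
  qed
qed



definition posw :: "('q,'a,'k::comm_semiring_1) twa \<Rightarrow> 'a ext \<Rightarrow> ('q\<times>'q\<times>dir) list \<Rightarrow> ('q\<times>'q\<times>dir) list \<Rightarrow> 'k" where
  "posw M a L R = prod_list (map (\<lambda>(p,q,d). the (tw_trans M p a d q)) (filter (\<lambda>x. snd (snd x) = Back) L)) *
                  prod_list (map (\<lambda>(p,q,d). the (tw_trans M p a d q)) (filter (\<lambda>x. snd (snd x) = Fwd) R))"

definition G :: "('q,'a,'k::comm_semiring_1) twa \<Rightarrow> 'a list \<Rightarrow> 'q \<times> int \<Rightarrow> 'q \<times> int \<Rightarrow> 'k" where
  "G M w c c' = the (tw_trans M (fst c) (letter_at w (snd c)) (dir_of (snd c) (snd c')) (fst c'))"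

lemma posw_append: "posw M a (L1 @ L) (R1 @ R) = posw M a L1 R1 * posw M a L R"
  by (simp add: posw_def mult_ac)

lemma posw_nil: "posw M a [] [] = 1" by (simp add: posw_def)

lemma posw_step:
  assumes "snd c' = snd c + 1 \<or> snd c' = snd c - 1"
  shows "posw M (letter_at w i) (cr1 c c' (i - 1)) (cr1 c c' i) = (if i = snd c then G M w c c' else 1)"
  using assms
proof
  assume a: "snd c' = snd c + 1"
  then show ?thesis by (auto simp: posw_def cr1_def dir_of_def G_def)
next
  assume a: "snd c' = snd c - 1"
  then show ?thesis by (auto simp: posw_def cr1_def dir_of_def G_def)
qed

lemma pw_posw:
  "okp M w cs \<Longrightarrow> \<forall>c\<in>set cs. 0 \<le> snd c \<and> snd c \<le> int (length w) + 1 \<Longrightarrow>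
   pw (G M w) cs = (\<Prod>i\<in>{..Suc (length w)}. posw M (letter_at w (int i)) (xs_of cs (int i - 1)) (xs_of cs (int i)))"
proof (induction "G M w" cs rule: pw.induct)
  case (1 c c' cs)
  have st: "snd c' = snd c + 1 \<or> snd c' = snd c - 1" using okp_step "1.prems"(1) by blast
  have IH: "pw (G M w) (c' # cs) = (\<Prod>i\<in>{..Suc (length w)}. posw M (letter_at w (int i)) (xs_of (c'#cs) (int i - 1)) (xs_of (c'#cs) (int i)))"
    using 1 okp_tl by auto
  have c0: "0 \<le> snd c" "snd c \<le> int (length w) + 1" using "1.prems"(2) by auto
  have "(\<Prod>i\<in>{..Suc (length w)}. posw M (letter_at w (int i)) (xs_of (c#c'#cs) (int i - 1)) (xs_of (c#c'#cs) (int i)))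
      = (\<Prod>i\<in>{..Suc (length w)}. (if i = nat (snd c) then G M w c c' else 1) *
           posw M (letter_at w (int i)) (xs_of (c'#cs) (int i - 1)) (xs_of (c'#cs) (int i)))"
  proof (rule prod.cong)
    fix i assume "i \<in> {..Suc (length w)}"
    have "(int i = snd c) = (i = nat (snd c))" using c0 by auto
    then show "posw M (letter_at w (int i)) (xs_of (c#c'#cs) (int i - 1)) (xs_of (c#c'#cs) (int i)) =
       (if i = nat (snd c) then G M w c c' else 1) * posw M (letter_at w (int i)) (xs_of (c'#cs) (int i - 1)) (xs_of (c'#cs) (int i))"
      using posw_step[OF st, of M w "int i"] by (simp add: posw_append)
  qed simp
  also have "\<dots> = (\<Prod>i\<in>{..Suc (length w)}. (if i = nat (snd c) then G M w c c' else 1)) * pw (G M w) (c' # cs)"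
    unfolding prod.distrib IH ..
  also have "(\<Prod>i\<in>{..Suc (length w)}. (if i = nat (snd c) then G M w c c' else 1)) = G M w c c'"
    using c0 by (subst prod.delta) auto
  finally show ?case by simp
next
  case ("2_1")
  then show ?case by (simp add: posw_nil)
next
  case ("2_2" v)
  then show ?case by (simp add: posw_nil)
qed



lemma okp_states:
  "okp M w cs \<Longrightarrow> twa_wf A M \<Longrightarrow> c \<in> set (tl cs) \<Longrightarrow> fst c \<in> tw_states M"
proof (induction M w cs rule: okp.induct)
  case (1 M w c0 c' cs)
  then obtain d where "tw_trans M (fst c0) (letter_at w (snd c0)) d (fst c') \<noteq> None" by auto
  then have "fst c' \<in> tw_states M" using "1.prems"(2) unfolding twa_wf_def by blast
  then show ?case using 1 by auto
qed auto

lemma comp_states: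
  assumes "cs \<in> tw_comps M w" "twa_wf A M" "c \<in> set cs"
  shows "fst c \<in> tw_states M"
proof -
  note C = assms(1)[unfolded tw_comps_iff]
  obtain c1 r where cs: "cs = c1 # r" using C by (cases cs) auto
  show ?thesis
  proof (cases "c = c1")
    case True
    then show ?thesis using C assms(2) cs unfolding twa_wf_def by auto
  next
    case False
    then have "c \<in> set (tl cs)" using assms(3) cs by simp
    then show ?thesis using okp_states C assms(2) by blast
  qed
qed

lemma xs_of_states:
  "okp M w cs \<Longrightarrow> twa_wf A M \<Longrightarrow> set (xs_of cs b) \<subseteq> tw_states M \<times> tw_states M \<times> UNIV"
proof (induction cs b rule: xs_of.induct)
  case (1 c c' cs b)
  then obtain d where "tw_trans M (fst c) (letter_at w (snd c)) d (fst c') \<noteq> None" by auto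
  then have "fst c \<in> tw_states M" "fst c' \<in> tw_states M" using "1.prems"(2) unfolding twa_wf_def by blast+
  then show ?case using 1 okp_tl by (auto simp: cr1_def)
qed auto

lemma xs_len:
  "okp M w cs \<Longrightarrow> length (xs_of cs b) \<le> length (filter (\<lambda>c. snd c = b \<or> snd c = b + 1) cs)"
proof (induction cs b rule: xs_of.induct)
  case (1 c c' cs b)
  have st: "snd c' = snd c + 1 \<or> snd c' = snd c - 1" using okp_step "1.prems" by blast
  have "length (cr1 c c' b) \<le> (if snd c = b \<or> snd c = b + 1 then 1 else 0)"
    using st by (auto simp: cr1_def)
  moreover have "length (xs_of (c' # cs) b) \<le> length (filter (\<lambda>c. snd c = b \<or> snd c = b + 1) (c' # cs))"
    using 1 okp_tl by blast
  ultimately show ?case by (auto split: if_splits)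
qed auto

lemma unamb_distinct:
  assumes U: "twa_unambiguous M" and cs: "cs \<in> tw_comps M w"
  shows "distinct cs"
proof (rule ccontr)
  assume "\<not> distinct cs"
  then obtain xs ys zs y where e: "cs = xs @ [y] @ ys @ [y] @ zs" using not_distinct_decomp by blast
  note C = cs[unfolded tw_comps_iff]
  have ok: "okp M w (xs @ y # ys @ y # zs)" using C e by simp
  have a1: "okp M w (xs @ [y])" and a2: "okp M w (y # ys @ y # zs)"
    using ok okp_append[of M w xs y "ys @ y # zs"] by auto
  have a3: "okp M w (y # ys @ [y])"
    using a2 okp_append[of M w "y # ys" y zs] by auto
  have b2: "okp M w (y # ys @ y # ys @ y # zs)"
    using a3 a2 okp_append[of M w "y # ys" y "ys @ y # zs"] by auto
  have ok': "okp M w (xs @ y # ys @ y # ys @ y # zs)"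
    using a1 b2 okp_append[of M w xs y "ys @ y # ys @ y # zs"] by auto
  let ?cs' = "xs @ y # ys @ y # ys @ y # zs"
  have "?cs' \<in> tw_comps M w"
    unfolding tw_comps_iff using C e ok' by (auto simp: hd_append)
  then have "?cs' = cs" using U cs unfolding twa_unambiguous_def by blast
  moreover have "length ?cs' = length cs + length ys + 1" using e by simp
  ultimately show False by simp
qed

lemma xs_len_bound:
  assumes U: "twa_unambiguous M" and W: "twa_wf A M" and cs: "cs \<in> tw_comps M w"
  shows "length (xs_of cs b) \<le> 2 * card (tw_states M)"
proof -
  note C = cs[unfolded tw_comps_iff]
  let ?P = "\<lambda>c::('q \<times> int). snd c = b \<or> snd c = b + 1"
  have d: "distinct (filter ?P cs)" using unamb_distinct[OF U cs] by simp
  have sub: "set (filter ?P cs) \<subseteq> tw_states M \<times> {b, b + 1}"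
    using comp_states[OF cs W] by auto
  have fin: "finite (tw_states M)" using W unfolding twa_wf_def by simp
  have "length (xs_of cs b) \<le> length (filter ?P cs)" using xs_len C by blast
  also have "\<dots> = card (set (filter ?P cs))" using distinct_card[OF d] by simp
  also have "\<dots> \<le> card (tw_states M \<times> {b, b + 1})"
    by (rule card_mono[OF _ sub]) (simp add: fin)
  also have "\<dots> = 2 * card (tw_states M)" by (simp add: card_cartesian_product)
  finally show ?thesis .
qed



type_synonym 'q view = "'q \<times> 'q \<times> bool \<times> ('q\<times>'q\<times>dir) list"

definition vp0 :: "'q view \<Rightarrow> 'q" where "vp0 v = fst v"
definition vpe :: "'q view \<Rightarrow> 'q" where "vpe v = fst (snd v)"
definition vz :: "'q view \<Rightarrow> bool" where "vz v = fst (snd (snd v))"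
definition vX :: "'q view \<Rightarrow> ('q\<times>'q\<times>dir) list" where "vX v = snd (snd (snd v))"

definition SV :: "('q,'a,'k) twa \<Rightarrow> 'q view set" where
  "SV M = {v. vp0 v \<in> tw_states M \<and> vpe v \<in> tw_states M \<and> set (vX v) \<subseteq> tw_states M \<times> tw_states M \<times> UNIV \<and>
              length (vX v) \<le> 2 * card (tw_states M)}"

definition NV :: "'a set \<Rightarrow> ('q,'a,'k::comm_semiring_1) twa \<Rightarrow> ('q view, 'a, 'k) owa" where
  "NV A M = \<lparr> ow_states = SV M,
     ow_init = (\<lambda>v. if v \<in> SV M \<and> vz v \<and> tw_init M (vp0 v) \<noteq> None \<and> chk0 M (vpe v) (vX v)
                  then Some (the (tw_init M (vp0 v)) * posw M LMark [] (vX v)) else None),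
     ow_final = (\<lambda>v. if v \<in> SV M \<and> tw_final M (vpe v) \<noteq> None \<and> chkI M RMark (vz v) True (vp0 v) (vpe v) (vX v) []
                  then Some (posw M RMark (vX v) [] * the (tw_final M (vpe v))) else None),
     ow_trans = (\<lambda>v a v'. if v \<in> SV M \<and> v' \<in> SV M \<and> a \<in> A \<and> vp0 v' = vp0 v \<and> vpe v' = vpe v \<and> \<not> vz v' \<and>
                      chkI M (Sym a) (vz v) False (vp0 v) (vpe v) (vX v) (vX v')
                  then Some (posw M (Sym a) (vX v) (vX v')) else None) \<rparr>"

definition enc :: "'a list \<Rightarrow> ('q \<times> int) list \<Rightarrow> 'q view list" where
  "enc w cs = map (\<lambda>j. (fst (hd cs), fst (last cs), j = 0, xs_of cs (int j))) [0..<length w + 1]"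

lemma finite_dir: "finite (UNIV :: dir set)"
proof -
  have "UNIV = {Back, Fwd}" using dir.exhaust by auto
  moreover have "finite {Back, Fwd}" by simp
  ultimately show ?thesis by metis
qed

lemma finite_SV: "finite (tw_states M) \<Longrightarrow> finite (SV M)"
proof -
  assume f: "finite (tw_states M)"
  let ?Q = "tw_states M"
  let ?C = "?Q \<times> ?Q \<times> (UNIV :: dir set)"
  have fC: "finite ?C" using f finite_dir by simp
  have "SV M \<subseteq> ?Q \<times> ?Q \<times> (UNIV :: bool set) \<times> {X. set X \<subseteq> ?C \<and> length X \<le> 2 * card ?Q}"
    unfolding SV_def vp0_def vpe_def vX_def by auto
  moreover have "finite (?Q \<times> ?Q \<times> (UNIV :: bool set) \<times> {X. set X \<subseteq> ?C \<and> length X \<le> 2 * card ?Q})"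
    using f finite_lists_length_le[OF fC] by simp
  ultimately show ?thesis by (rule finite_subset)
qed

lemma nth_enc: "j < length w + 1 \<Longrightarrow> enc w cs ! j = (fst (hd cs), fst (last cs), j = 0, xs_of cs (int j))"
  by (simp add: enc_def del: upt_Suc)

lemma length_enc: "length (enc w cs) = length w + 1" by (simp add: enc_def)

context
  fixes A :: "'a set" and M :: "('q,'a,'k::comm_semiring_1) twa" and w :: "'a list" and cs :: "('q \<times> int) list"
  assumes W: "twa_wf A M" and U: "twa_unambiguous M" and cs: "cs \<in> tw_comps M w"
begin

lemma letter_at_Sym': "j < length w \<Longrightarrow> letter_at w (1 + int j) = Sym (w ! j)"
  using letter_at_Sym[of j w] by (simp add: add.commute)

lemma enc_SV: "j < length w + 1 \<Longrightarrow> enc w cs ! j \<in> SV M"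
proof -
  assume j: "j < length w + 1"
  note C = cs[unfolded tw_comps_iff]
  have "fst (hd cs) \<in> tw_states M" "fst (last cs) \<in> tw_states M"
    using comp_states[OF cs W] C by auto
  moreover have "set (xs_of cs (int j)) \<subseteq> tw_states M \<times> tw_states M \<times> UNIV"
    using xs_of_states C W by blast
  moreover have "length (xs_of cs (int j)) \<le> 2 * card (tw_states M)" using xs_len_bound[OF U W cs] .
  ultimately show ?thesis using j by (simp add: nth_enc SV_def vp0_def vpe_def vX_def)
qed

lemma xs_of_out: "xs_of cs (int (length w) + 1) = []" "xs_of cs (-1) = []"
proof -
  note C = cs[unfolded tw_comps_iff]
  have "\<forall>c\<in>set cs. snd c < int (length w) + 2" using C by auto
  from xs_of_below[of M w cs "int (length w) + 2" "int (length w) + 1", OF _ this] C show "xs_of cs (int (length w) + 1) = []" by simp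
  have "\<forall>c\<in>set cs. -1 < snd c" using C by auto
  from xs_of_above[OF this, of "-1"] show "xs_of cs (-1) = []" by simp
qed

lemma enc_init: "ow_init (NV A M) (enc w cs ! 0) = Some (the (tw_init M (fst (hd cs))) * posw M LMark [] (xs_of cs 0))"
proof -
  note C = cs[unfolded tw_comps_iff]
  show ?thesis using enc_SV[of 0] C pos0_chk[OF cs]
    by (simp add: NV_def nth_enc vp0_def vpe_def vz_def vX_def)
qed

lemma enc_final: "ow_final (NV A M) (enc w cs ! length w) = Some (posw M RMark (xs_of cs (int (length w))) [] * the (tw_final M (fst (last cs))))"
proof -
  note C = cs[unfolded tw_comps_iff]
  have "chkI M (letter_at w (int (length w) + 1)) (int (length w) + 1 = 1) (int (length w) + 1 = int (length w) + 1)
      (fst (hd cs)) (fst (last cs)) (xs_of cs (int (length w) + 1 - 1)) (xs_of cs (int (length w) + 1))"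
    by (rule pos_chk[OF cs]) auto
  then have "chkI M RMark (length w = 0) True (fst (hd cs)) (fst (last cs)) (xs_of cs (int (length w))) []"
    using xs_of_out by (simp add: letter_at_end)
  then show ?thesis using enc_SV[of "length w"] C
    by (simp add: NV_def nth_enc vp0_def vpe_def vz_def vX_def)
qed

lemma enc_trans:
  assumes j: "j < length w" and wA: "w \<in> lists A"
  shows "ow_trans (NV A M) (enc w cs ! j) (w ! j) (enc w cs ! Suc j) =
         Some (posw M (Sym (w ! j)) (xs_of cs (int j)) (xs_of cs (int (Suc j))))"
proof -
  have "chkI M (letter_at w (int j + 1)) (int j + 1 = 1) (int j + 1 = int (length w) + 1)
      (fst (hd cs)) (fst (last cs)) (xs_of cs (int j + 1 - 1)) (xs_of cs (int j + 1))"
    by (rule pos_chk[OF cs]) (use j in auto)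
  then have "chkI M (Sym (w ! j)) (j = 0) False (fst (hd cs)) (fst (last cs)) (xs_of cs (int j)) (xs_of cs (int (Suc j)))"
    using j by (simp add: letter_at_Sym' add.commute)
  moreover have "w ! j \<in> A" using wA j by (simp add: in_set_conv_nth lists_eq_set) (metis nth_mem subsetD)
  ultimately show ?thesis using enc_SV[of j] enc_SV[of "Suc j"] j
    by (simp add: NV_def nth_enc vp0_def vpe_def vz_def vX_def)
qed

lemma enc_comps: "w \<in> lists A \<Longrightarrow> enc w cs \<in> ow_comps (NV A M) w"
  unfolding ow_comps_def using enc_init enc_final enc_trans by (simp add: length_enc)

lemma enc_weight:
  assumes wA: "w \<in> lists A"
  shows "ow_comp_weight (NV A M) w (enc w cs) = tw_comp_weight M w cs"
proof -
  note C = cs[unfolded tw_comps_iff]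
  let ?f = "\<lambda>i::nat. posw M (letter_at w (int i)) (xs_of cs (int i - 1)) (xs_of cs (int i))"
  have "prod_list (map (\<lambda>j. the (ow_trans (NV A M) (enc w cs ! j) (w ! j) (enc w cs ! (j + 1)))) [0..<length w])
      = prod_list (map (\<lambda>j. ?f (Suc j)) [0..<length w])"
    by (rule arg_cong[where f=prod_list], rule map_cong) (auto simp: enc_trans[OF _ wA] letter_at_Sym')
  also have "\<dots> = (\<Prod>j<length w. ?f (Suc j))"
    by (subst prod.distinct_set_conv_list[symmetric]) (auto simp: atLeast0LessThan)
  finally have T: "prod_list (map (\<lambda>j. the (ow_trans (NV A M) (enc w cs ! j) (w ! j) (enc w cs ! (j + 1)))) [0..<length w])
      = (\<Prod>j<length w. ?f (Suc j))" .
  have P: "pw (G M w) cs = (\<Prod>i\<in>{..Suc (length w)}. ?f i)" using pw_posw C by blast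
  have "(\<Prod>i\<in>{..Suc (length w)}. ?f i) = ?f 0 * (\<Prod>j<length w. ?f (Suc j)) * ?f (Suc (length w))"
    by (simp add: prod.atMost_shift mult_ac)
  also have "?f 0 = posw M LMark [] (xs_of cs 0)" using xs_of_out by (simp add: letter_at_0)
  also have "?f (Suc (length w)) = posw M RMark (xs_of cs (int (length w))) []"
    using xs_of_out by (simp add: letter_at_def add.commute)
  finally have P2: "pw (G M w) cs = posw M LMark [] (xs_of cs 0) * (\<Prod>j<length w. ?f (Suc j)) * posw M RMark (xs_of cs (int (length w))) []"
    using P by simp
  show ?thesis
    unfolding ow_comp_weight_def tw_comp_weight_pw length_enc
    using enc_init enc_final T P2 by (simp add: G_def[symmetric] mult_ac)
qed

end



lemma view_eq: "v = (vp0 v, vpe v, vz v, vX v)" by (simp add: vp0_def vpe_def vz_def vX_def)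

lemma dec_comps:
  assumes qs: "qs \<in> ow_comps (NV A M) w"
  shows "\<exists>cs \<in> tw_comps M w. qs = enc w cs"
proof -
  let ?n = "length w"
  have len: "length qs = ?n + 1" using qs by (simp add: ow_comps_def)
  have I: "ow_init (NV A M) (qs ! 0) \<noteq> None" using qs by (simp add: ow_comps_def)
  have F: "ow_final (NV A M) (qs ! ?n) \<noteq> None" using qs by (simp add: ow_comps_def)
  have T: "\<And>j. j < ?n \<Longrightarrow> ow_trans (NV A M) (qs ! j) (w ! j) (qs ! Suc j) \<noteq> None" using qs by (simp add: ow_comps_def)
  define p0 where "p0 = vp0 (qs ! 0)"
  define pe where "pe = vpe (qs ! 0)"
  have I': "vz (qs ! 0)" "tw_init M p0 \<noteq> None" "chk0 M pe (vX (qs ! 0))"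
    using I by (auto simp: NV_def p0_def pe_def split: if_splits)
  have T': "\<And>j. j < ?n \<Longrightarrow> vp0 (qs ! Suc j) = vp0 (qs ! j) \<and> vpe (qs ! Suc j) = vpe (qs ! j) \<and> \<not> vz (qs ! Suc j) \<and>
      chkI M (Sym (w ! j)) (vz (qs ! j)) False (vp0 (qs ! j)) (vpe (qs ! j)) (vX (qs ! j)) (vX (qs ! Suc j))"
  proof -
    fix j assume "j < ?n"
    then have "ow_trans (NV A M) (qs ! j) (w ! j) (qs ! Suc j) \<noteq> None" by (rule T)
    then show "?thesis j" by (simp add: NV_def split: if_splits)
  qed
  have const: "\<And>j. j \<le> ?n \<Longrightarrow> vp0 (qs ! j) = p0 \<and> vpe (qs ! j) = pe \<and> vz (qs ! j) = (j = 0)"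
  proof -
    fix j show "j \<le> ?n \<Longrightarrow> vp0 (qs ! j) = p0 \<and> vpe (qs ! j) = pe \<and> vz (qs ! j) = (j = 0)"
    proof (induction j)
      case 0 then show ?case using I' by (simp add: p0_def pe_def)
    next
      case (Suc j) then show ?case using T'[of j] by auto
    qed
  qed
  have F': "tw_final M pe \<noteq> None" "chkI M RMark (?n = 0) True p0 pe (vX (qs ! ?n)) []"
    using F const[of ?n] by (auto simp: NV_def split: if_splits)
  have T'': "\<And>j. j < ?n \<Longrightarrow> chkI M (Sym (w ! j)) (j = 0) False p0 pe (vX (qs ! j)) (vX (qs ! Suc j))"
    using T' const by fastforce
  define rem where "rem b = (if 0 \<le> b \<and> b \<le> int ?n then vX (qs ! nat b) else [])" for b
  have remk: "\<And>k. k \<le> ?n \<Longrightarrow> rem (int k) = vX (qs ! k)" by (simp add: rem_def)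
  have Inv: "Inv M w pe p0 1 rem"
    unfolding Inv_def
  proof (intro conjI allI impI)
    show "(0::int) \<le> 1" "1 \<le> int ?n + 1" by auto
    show "vis M (letter_at w 1) (1 = int ?n + 1) pe p0 (rem (1 - 1)) (rem 1)"
    proof (cases "?n = 0")
      case True
      then show ?thesis using F'(2) by (simp add: chkI_def letter_at_def rem_def)
    next
      case False
      then have "chkI M (Sym (w ! 0)) True False p0 pe (vX (qs ! 0)) (vX (qs ! 1))" using T''[of 0] by simp
      moreover have "letter_at w 1 = Sym (w ! 0)" using False letter_at_Sym[of 0 w] by simp
      moreover have "rem 0 = vX (qs ! 0)" "rem 1 = vX (qs ! 1)" using False remk[of 0] remk[of 1] by (auto simp: Suc_le_eq)
      ultimately show ?thesis using False by (simp add: chkI_def)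
    qed
  next
    fix j :: int assume j: "0 \<le> j \<and> j < 1"
    then have j0: "j = 0" by simp
    have r0: "rem 0 = vX (qs ! 0)" "rem (-1) = []" using remk[of 0] by (auto simp: rem_def)
    show "waitR M w pe rem j"
      using I'(3) j0 r0 by (auto simp: waitR_def chk0_def letter_at_0)
  next
    fix j :: int assume j: "1 < j \<and> j \<le> int ?n + 1"
    define k where "k = nat j"
    have k: "j = int k" "2 \<le> k" "k \<le> ?n + 1" using j unfolding k_def by auto
    show "waitL M w pe rem j"
    proof (cases "k = ?n + 1")
      case True
      then have "chkI M RMark False True p0 pe (vX (qs ! ?n)) []" using F'(2) k by (auto simp: Suc_le_eq)
      moreover have "rem (j - 1) = vX (qs ! ?n)" "rem j = []" using remk[of ?n] k True by (auto simp: rem_def)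
      ultimately show ?thesis using k True by (auto simp: chkI_def waitL_def letter_at_def)
    next
      case False
      then have "k - 1 < ?n" "k \<le> ?n" using k by auto
      then have "chkI M (Sym (w ! (k - 1))) False False p0 pe (vX (qs ! (k - 1))) (vX (qs ! k))"
        using T''[of "k - 1"] k by simp
      moreover have "rem (j - 1) = vX (qs ! (k - 1))" "rem j = vX (qs ! k)"
        using remk[of "k - 1"] remk[of k] k \<open>k \<le> ?n\<close> by (auto simp: of_nat_diff)
      moreover have "letter_at w j = Sym (w ! (k - 1))" using letter_at_Sym[of "k - 1" w] k \<open>k \<le> ?n\<close> by auto
      ultimately show ?thesis using k \<open>k \<le> ?n\<close> by (auto simp: chkI_def waitL_def)
    qed
  next
    fix b :: int assume "b < 0 \<or> int ?n < b"
    then show "rem b = []" by (auto simp: rem_def)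
  qed
  obtain path where p: "path \<noteq> []" "hd path = (p0, 1)" "last path = (pe, int ?n + 1)" "okp M w path"
      "\<forall>c\<in>set path. 0 \<le> snd c \<and> snd c \<le> int ?n + 1" "\<forall>b. xs_of path b = rem b"
    using decode[OF Inv] by blast
  have cs: "path \<in> tw_comps M w" unfolding tw_comps_iff using p I'(2) F'(1) by simp
  have "qs = enc w path"
  proof (rule nth_equalityI)
    show "length qs = length (enc w path)" using len length_enc by metis
  next
    fix j assume "j < length qs"
    then have j: "j \<le> ?n" using len by simp
    then show "qs ! j = enc w path ! j"
      using const[OF j] p(2,3,6) remk[OF j] view_eq[of "qs ! j"] by (simp add: nth_enc)
  qed
  with cs show ?thesis by blast
qed



definition ren :: "('v \<Rightarrow> nat) \<Rightarrow> ('v,'a,'k) owa \<Rightarrow> (nat,'a,'k) owa" where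
  "ren f N = \<lparr> ow_states = f ` ow_states N,
     ow_init = (\<lambda>n. if n \<in> f ` ow_states N then ow_init N (inv_into (ow_states N) f n) else None),
     ow_final = (\<lambda>n. if n \<in> f ` ow_states N then ow_final N (inv_into (ow_states N) f n) else None),
     ow_trans = (\<lambda>n a m. if n \<in> f ` ow_states N \<and> m \<in> f ` ow_states N
                   then ow_trans N (inv_into (ow_states N) f n) a (inv_into (ow_states N) f m) else None) \<rparr>"

lemma comps_in_states:
  assumes wf: "owa_wf A N" and qs: "qs \<in> ow_comps N w"
  shows "set qs \<subseteq> ow_states N"
proof
  fix x assume "x \<in> set qs"
  then obtain j where j: "j < length qs" "x = qs ! j" by (auto simp: in_set_conv_nth)
  have len: "length qs = length w + 1" using qs by (simp add: ow_comps_def)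
  show "x \<in> ow_states N"
  proof (cases "j < length w")
    case True
    then have "ow_trans N (qs ! j) (w ! j) (qs ! (j+1)) \<noteq> None" using qs by (simp add: ow_comps_def)
    then show ?thesis using wf j unfolding owa_wf_def by blast
  next
    case False
    then have "j = length w" using j len by simp
    then have "ow_final N (qs ! j) \<noteq> None" using qs by (simp add: ow_comps_def)
    then show ?thesis using wf j unfolding owa_wf_def by blast
  qed
qed

context
  fixes f :: "'v \<Rightarrow> nat" and N :: "('v,'a,'k::comm_semiring_1) owa" and A :: "'a set"
  assumes inj: "inj_on f (ow_states N)" and wf: "owa_wf A N"
begin

lemma ren_wf: "owa_wf A (ren f N)"
  using wf unfolding owa_wf_def ren_def by (auto split: if_splits)

lemma ren_comps_map: "qs \<in> ow_comps N w \<Longrightarrow> map f qs \<in> ow_comps (ren f N) w"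
proof -
  assume qs: "qs \<in> ow_comps N w"
  have S: "set qs \<subseteq> ow_states N" using comps_in_states[OF wf qs] .
  have len: "length qs = length w + 1" using qs by (simp add: ow_comps_def)
  have gf: "\<And>j. j < length qs \<Longrightarrow> inv_into (ow_states N) f (f (qs ! j)) = qs ! j"
    using S inj by (meson inv_into_f_f nth_mem subsetD)
  have mem: "\<And>j. j < length qs \<Longrightarrow> f (qs ! j) \<in> f ` ow_states N" using S by (meson imageI nth_mem subsetD)
  show ?thesis using qs len gf mem unfolding ow_comps_def ren_def by auto
qed

lemma ren_weight: "qs \<in> ow_comps N w \<Longrightarrow> ow_comp_weight (ren f N) w (map f qs) = ow_comp_weight N w qs"
proof -
  assume qs: "qs \<in> ow_comps N w"
  have S: "set qs \<subseteq> ow_states N" using comps_in_states[OF wf qs] .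
  have len: "length qs = length w + 1" using qs by (simp add: ow_comps_def)
  have gf: "\<And>j. j < length qs \<Longrightarrow> inv_into (ow_states N) f (f (qs ! j)) = qs ! j"
    using S inj by (meson inv_into_f_f nth_mem subsetD)
  have mem: "\<And>j. j < length qs \<Longrightarrow> f (qs ! j) \<in> f ` ow_states N" using S by (meson imageI nth_mem subsetD)
  have "prod_list (map (\<lambda>j. the (ow_trans (ren f N) (map f qs ! j) (w ! j) (map f qs ! (j+1)))) [0..<length w]) =
        prod_list (map (\<lambda>j. the (ow_trans N (qs ! j) (w ! j) (qs ! (j+1)))) [0..<length w])"
    by (rule arg_cong[where f=prod_list], rule map_cong) (use len gf mem in \<open>auto simp: ren_def\<close>)
  then show ?thesis unfolding ow_comp_weight_def using len gf mem by (simp add: ren_def)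
qed

lemma ren_comps: "ow_comps (ren f N) w = map f ` ow_comps N w"
proof
  show "map f ` ow_comps N w \<subseteq> ow_comps (ren f N) w" using ren_comps_map by blast
next
  show "ow_comps (ren f N) w \<subseteq> map f ` ow_comps N w"
  proof
    fix qs' assume qs': "qs' \<in> ow_comps (ren f N) w"
    have S: "set qs' \<subseteq> f ` ow_states N"
      using comps_in_states[OF ren_wf qs'] by (simp add: ren_def)
    let ?g = "inv_into (ow_states N) f"
    have fg: "map f (map ?g qs') = qs'"
      unfolding map_map by (rule map_idI) (use S in \<open>auto simp: f_inv_into_f\<close>)
    have len: "length qs' = length w + 1" using qs' by (simp add: ow_comps_def)
    have mem: "\<And>j. j < length qs' \<Longrightarrow> qs' ! j \<in> f ` ow_states N" using S by auto
    have "map ?g qs' \<in> ow_comps N w"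
      using qs' len mem unfolding ow_comps_def ren_def by (auto split: if_splits)
    with fg show "qs' \<in> map f ` ow_comps N w" by (metis image_eqI)
  qed
qed

lemma ren_inj: "inj_on (map f) (ow_comps N w)"
proof (rule inj_onI)
  fix x y assume x: "x \<in> ow_comps N w" and y: "y \<in> ow_comps N w" and e: "map f x = map f y"
  have "set x \<subseteq> ow_states N" "set y \<subseteq> ow_states N" using comps_in_states[OF wf] x y by auto
  then show "x = y" using e inj by (metis inj_on_map_eq_map inj_on_subset sup.bounded_iff set_append)
qed

lemma ren_weight_word: "ow_weight (ren f N) w = ow_weight N w"
  unfolding ow_weight_def ren_comps
  by (subst sum.reindex[OF ren_inj]) (simp add: ren_weight)

lemma ren_unamb: "owa_unambiguous N \<Longrightarrow> owa_unambiguous (ren f N)"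
  unfolding owa_unambiguous_def ren_comps by auto

end



lemma NV_wf: "twa_wf A M \<Longrightarrow> owa_wf A (NV A M)"
  unfolding owa_wf_def using finite_SV[of M]
  by (auto simp: NV_def twa_wf_def split: if_splits)

lemma NV_unamb:
  assumes U: "twa_unambiguous M"
  shows "owa_unambiguous (NV A M)"
  unfolding owa_unambiguous_def
proof (intro allI impI)
  fix w qs qs' assume "qs \<in> ow_comps (NV A M) w" "qs' \<in> ow_comps (NV A M) w"
  then obtain cs cs' where "cs \<in> tw_comps M w" "qs = enc w cs" "cs' \<in> tw_comps M w" "qs' = enc w cs'"
    using dec_comps by metis
  then show "qs = qs'" using U unfolding twa_unambiguous_def by blast
qed

lemma NV_weight:
  assumes W: "twa_wf A M" and U: "twa_unambiguous M" and wA: "w \<in> lists A"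
  shows "ow_weight (NV A M) w = tw_weight M w"
proof (cases "tw_comps M w = {}")
  case True
  then have "ow_comps (NV A M) w = {}" using dec_comps by fastforce
  then show ?thesis using True by (simp add: ow_weight_def tw_weight_def)
next
  case False
  then obtain cs where cs: "cs \<in> tw_comps M w" by blast
  then have T: "tw_comps M w = {cs}" using U unfolding twa_unambiguous_def by blast
  have O: "ow_comps (NV A M) w = {enc w cs}"
  proof
    show "{enc w cs} \<subseteq> ow_comps (NV A M) w" using enc_comps[OF W U cs wA] by simp
    show "ow_comps (NV A M) w \<subseteq> {enc w cs}" using dec_comps T by fastforce
  qed
  show ?thesis unfolding ow_weight_def tw_weight_def O T using enc_weight[OF W U cs wA] by simp
qed

theorem mainTheorem4:
  fixes A :: "'a set" and M :: "('q, 'a, 'k::comm_semiring_1) twa"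
  assumes "twa_wf A M" and "twa_unambiguous M"
  shows "\<exists>N :: (nat, 'a, 'k) owa. owa_wf A N \<and> owa_unambiguous N \<and>
           (\<forall>w \<in> lists A. ow_weight N w = tw_weight M w)"
proof -
  have fin: "finite (ow_states (NV A M))" using assms(1) finite_SV[of M] by (simp add: NV_def twa_wf_def)
  obtain f :: "'q view \<Rightarrow> nat" and m where "f ` ow_states (NV A M) = {i. i < m}" "inj_on f (ow_states (NV A M))"
    using finite_imp_inj_to_nat_seg[OF fin] by blast
  note inj = this(2)
  have wf: "owa_wf A (NV A M)" using NV_wf[OF assms(1)] .
  show ?thesis
  proof (intro exI[of _ "ren f (NV A M)"] conjI ballI)
    show "owa_wf A (ren f (NV A M))" using ren_wf[OF inj wf] .
    show "owa_unambiguous (ren f (NV A M))" using ren_unamb[OF inj wf NV_unamb[OF assms(2)]] .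
    fix w assume "w \<in> lists A"
    then show "ow_weight (ren f (NV A M)) w = tw_weight M w"
      using ren_weight_word[OF inj wf] NV_weight[OF assms] by simp
  qed
qed


end
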